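(* CTL*$_{cd}$ has a tree-like model property: every satisfiable CTL*$_{cd}$ state formula $\varphi$ is satisfied (i.e. $\mathcal K\models\varphi$) by some Kripke structure $\mathcal K$ that is a tree with back edges.
   Context: A Kripke structure over a finite set $AP$ of atomic propositions is a tuple $\mathcal K=(AP,W,R,L,w_I)$ where $W$ is a countable non-empty set of worlds, $w_I\in W$ is the initial world, $R\subseteq W\times W$ is a left-total transition relation (every world has at least one $R$-successor), and $L:W\to 2^{AP}$ is a labelling function. A path is an infinite sequence $\pi=\pi_0\pi_1\cdots$ of worlds with $(\pi_i,\pi_{i+1})\in R$ for all $i\in\mathbb N$; $\mathrm{Pth}(w)$ is the set of paths with $\pi_0=w$. A path $\pi$ is a cycle if for every $i\in\mathbb N$ there is $j>i$ with $\pi_j=\pi_0$ (i.e. $\pi_0$ occurs infinitely often in $\pi$); $\mathrm{Cyc}(w)$ is the set of cycles with $\pi_0=w$. Syntax of CTL*$_{cd}$: state formulas $\varphi::=p\mid\neg\varphi\mid\varphi\wedge\varphi\mid\varphi\vee\varphi\mid \mathsf E\psi\mid\mathsf A\psi\mid\mathsf E^{c}\psi\mid\mathsf A^{c}\psi$ with $p\in AP$; path formulas $\psi::=\varphi\mid\neg\psi\mid\psi\wedge\psi\mid\psi\vee\psi\mid\mathsf X\psi\mid\psi\,\mathsf U\,\psi$. Semantics: $\mathcal K,w\models p$ iff $p\in L(w)$; Boolean connectives as usual; $\mathcal K,w\models\mathsf E\psi$ iff some $\pi\in\mathrm{Pth}(w)$ has $\mathcal K,\pi,0\models\psi$; $\mathcal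 K,w\models\mathsf A\psi$ iff every $\pi\in\mathrm{Pth}(w)$ has $\mathcal K,\pi,0\models\psi$; $\mathcal K,w\models\mathsf E^{c}\psi$ iff some $\pi\in\mathrm{Cyc}(w)$ has $\mathcal K,\pi,0\models\psi$; $\mathcal K,w\models\mathsf A^{c}\psi$ iff every $\pi\in\mathrm{Cyc}(w)$ has $\mathcal K,\pi,0\models\psi$. For paths: $\mathcal K,\pi,i\models\varphi$ (state formula) iff $\mathcal K,\pi_i\models\varphi$; Boolean connectives as usual; $\mathcal K,\pi,i\models\mathsf X\psi$ iff $\mathcal K,\pi,i+1\models\psi$; $\mathcal K,\pi,i\models\psi_1\mathsf U\psi_2$ iff there is $k\ge0$ with $\mathcal K,\pi,i+k\models\psi_2$ and $\mathcal K,\pi,i+j\models\psi_1$ for all $0\le j<k$. $\mathcal K\models\varphi$ iff $\mathcal K,w_I\models\varphi$. A state formula is satisfiable if $\mathcal K\models\varphi$ for some Kripke structure $\mathcal K$. A Kripke structure $\mathcal K=(AP,W,R,L,w_I)$ is a tree with back edges if there exist a relation $R_0\subseteq W\times W$ and a partial map $f:W\to W$ such that: (i) $(W,R_0)$ is a tree with root $w_I$ ($R_0$ being the child relation); (ii) $R=R_0\cup\{(w,f(w)) : w\in\mathrm{dom}(f)\}$; (iii) for every $w\in\mathrm{dom}(f)$, $f(w)$ is an ancestor of $w$ in the tree, i.e. $(f(w),w)\in R_0^+$ (with $R_0^+$ the transitive closure of $R_0$); (iv) for all $w_1,w_2\in W$, if $f(w_1)$ is defined and $(f(w_2),w_1)\in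 R_0^+$ and $(w_1,w_2)\in R_0^+$, then $f(w_1)=f(w_2)$. *)

theory Defs
  imports "HOL-Library.Countable_Set"
begin

record ('a, 'w) kripke =
  AP :: "'a set"
  W  :: "'w set"
  R  :: "('w \<times> 'w) set"
  L  :: "'w \<Rightarrow> 'a set"
  wI :: 'w

definition is_kripke :: "('a, 'w) kripke \<Rightarrow> bool" where
  "is_kripke K \<longleftrightarrow>
     finite (AP K) \<and> countable (W K) \<and> W K \<noteq> {} \<and> wI K \<in> W K \<and>
     R K \<subseteq> W K \<times> W K \<and>
     (\<forall>w\<in>W K. \<exists>v. (w, v) \<in> R K) \<and>
     (\<forall>w\<in>W K. L K w \<subseteq> AP K)"

definition Pth :: "('a, 'w) kripke \<Rightarrow> 'w \<Rightarrow> (nat \<Rightarrow> 'w) set" where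
  "Pth K w = {\<pi>. \<pi> 0 = w \<and> (\<forall>i. (\<pi> i, \<pi> (Suc i)) \<in> R K)}"

definition is_cycle :: "(nat \<Rightarrow> 'w) \<Rightarrow> bool" where
  "is_cycle \<pi> \<longleftrightarrow> (\<forall>i. \<exists>j>i. \<pi> j = \<pi> 0)"

definition Cyc :: "('a, 'w) kripke \<Rightarrow> 'w \<Rightarrow> (nat \<Rightarrow> 'w) set" where
  "Cyc K w = {\<pi> \<in> Pth K w. is_cycle \<pi>}"

datatype 'a sform =
    Prop 'a
  | SNot "'a sform"
  | SAnd "'a sform" "'a sform"
  | SOr "'a sform" "'a sform"
  | Ex "'a pform"
  | All "'a pform"
  | ExC "'a pform"
  | AllC "'a pform"
and 'a pform =
    State "'a sform"
  | PNot "'a pform"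
  | PAnd "'a pform" "'a pform"
  | POr "'a pform" "'a pform"
  | Next "'a pform"
  | Until "'a pform" "'a pform"

primrec sat_s :: "('a, 'w) kripke \<Rightarrow> 'w \<Rightarrow> 'a sform \<Rightarrow> bool"
and sat_p :: "('a, 'w) kripke \<Rightarrow> (nat \<Rightarrow> 'w) \<Rightarrow> nat \<Rightarrow> 'a pform \<Rightarrow> bool" where
  "sat_s K w (Prop p) = (p \<in> L K w)"
| "sat_s K w (SNot \<phi>) = (\<not> sat_s K w \<phi>)"
| "sat_s K w (SAnd \<phi>1 \<phi>2) = (sat_s K w \<phi>1 \<and> sat_s K w \<phi>2)"
| "sat_s K w (SOr \<phi>1 \<phi>2) = (sat_s K w \<phi>1 \<or> sat_s K w \<phi>2)"
| "sat_s K w (Ex \<psi>) = (\<exists>\<pi>\<in>Pth K w. sat_p K \<pi> 0 \<psi>)"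
| "sat_s K w (All \<psi>) = (\<forall>\<pi>\<in>Pth K w. sat_p K \<pi> 0 \<psi>)"
| "sat_s K w (ExC \<psi>) = (\<exists>\<pi>\<in>Cyc K w. sat_p K \<pi> 0 \<psi>)"
| "sat_s K w (AllC \<psi>) = (\<forall>\<pi>\<in>Cyc K w. sat_p K \<pi> 0 \<psi>)"
| "sat_p K \<pi> i (State \<phi>) = sat_s K (\<pi> i) \<phi>"
| "sat_p K \<pi> i (PNot \<psi>) = (\<not> sat_p K \<pi> i \<psi>)"
| "sat_p K \<pi> i (PAnd \<psi>1 \<psi>2) = (sat_p K \<pi> i \<psi>1 \<and> sat_p K \<pi> i \<psi>2)"
| "sat_p K \<pi> i (POr \<psi>1 \<psi>2) = (sat_p K \<pi> i \<psi>1 \<or> sat_p K \<pi> i \<psi>2)"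
| "sat_p K \<pi> i (Next \<psi>) = sat_p K \<pi> (Suc i) \<psi>"
| "sat_p K \<pi> i (Until \<psi>1 \<psi>2) =
     (\<exists>k. sat_p K \<pi> (i + k) \<psi>2 \<and> (\<forall>j<k. sat_p K \<pi> (i + j) \<psi>1))"

definition models :: "('a, 'w) kripke \<Rightarrow> 'a sform \<Rightarrow> bool" where
  "models K \<phi> \<longleftrightarrow> sat_s K (wI K) \<phi>"

definition is_tree :: "'w set \<Rightarrow> ('w \<times> 'w) set \<Rightarrow> 'w \<Rightarrow> bool" where
  "is_tree V R0 r \<longleftrightarrow>
     r \<in> V \<and> R0 \<subseteq> V \<times> V \<and>
     (\<forall>u. (u, r) \<notin> R0) \<and>
     (\<forall>w\<in>V. w \<noteq> r \<longrightarrow> (\<exists>!u. (u, w) \<in> R0)) \<and>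
     (\<forall>w\<in>V. (r, w) \<in> R0\<^sup>*)"

definition tree_with_back_edges :: "('a, 'w) kripke \<Rightarrow> bool" where
  "tree_with_back_edges K \<longleftrightarrow>
    (\<exists>R0 (f :: 'w \<rightharpoonup> 'w).
       is_tree (W K) R0 (wI K) \<and>
       R K = R0 \<union> {(w, the (f w)) | w. w \<in> dom f} \<and>
       (\<forall>w\<in>dom f. (the (f w), w) \<in> R0\<^sup>+) \<and>
       (\<forall>w1 w2. w1 \<in> dom f \<longrightarrow> w2 \<in> dom f \<longrightarrow>
          (the (f w2), w1) \<in> R0\<^sup>+ \<longrightarrow> (w1, w2) \<in> R0\<^sup>+ \<longrightarrow> f w1 = f w2))"

end

theory Submission
  imports Defs
begin

lemma path_in_V:
  assumes closed: "\<And>x y. x \<in> V \<Longrightarrow> (x,y) \<in> R K' \<Longrightarrow> y \<in> V"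
  and "\<pi>' \<in> Pth K' x" "x \<in> V"
  shows "\<pi>' j \<in> V"
  using assms(2,3) by (induction j) (auto simp: Pth_def intro: closed)

lemma hom:
  fixes K :: "('a,'w) kripke" and K' :: "('a,'v) kripke" and g :: "'v \<Rightarrow> 'w"
  assumes closed: "\<And>x y. x \<in> V \<Longrightarrow> (x,y) \<in> R K' \<Longrightarrow> y \<in> V"
  and edge: "\<And>x y. x \<in> V \<Longrightarrow> (x,y) \<in> R K' \<Longrightarrow> (g x, g y) \<in> R K"
  and lab: "\<And>x. x \<in> V \<Longrightarrow> L K' x = L K (g x)"
  and liftP: "\<And>x \<pi>. x \<in> V \<Longrightarrow> \<pi> \<in> Pth K (g x) \<Longrightarrow> \<exists>\<pi>'\<in>Pth K' x. g \<circ> \<pi>' = \<pi>"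
  and liftC: "\<And>x \<pi>. x \<in> V \<Longrightarrow> \<pi> \<in> Cyc K (g x) \<Longrightarrow> \<exists>\<pi>'\<in>Cyc K' x. g \<circ> \<pi>' = \<pi>"
  shows "(\<forall>x\<in>V. sat_s K' x \<phi> = sat_s K (g x) \<phi>)" and
         "(\<forall>\<pi>'. (\<forall>j. \<pi>' j \<in> V) \<longrightarrow> (\<forall>i. sat_p K' \<pi>' i \<psi> = sat_p K (g \<circ> \<pi>') i \<psi>))"
proof -
  have inV0: "\<pi>' j \<in> V" if "\<pi>' \<in> Pth K' x" "x \<in> V" for \<pi>' x j
    using that by (induction j) (auto simp: Pth_def intro: closed)
  have inV: "\<And>\<pi>' x. \<pi>' \<in> Pth K' x \<Longrightarrow> x \<in> V \<Longrightarrow> \<forall>j. \<pi>' j \<in> V"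
    using inV0 by blast
  have proj: "\<And>\<pi>' x. \<pi>' \<in> Pth K' x \<Longrightarrow> x \<in> V \<Longrightarrow> g \<circ> \<pi>' \<in> Pth K (g x)"
    using inV edge by (auto simp: Pth_def)
  have projC: "\<And>\<pi>' x. \<pi>' \<in> Cyc K' x \<Longrightarrow> x \<in> V \<Longrightarrow> g \<circ> \<pi>' \<in> Cyc K (g x)"
    using proj by (auto simp: Cyc_def is_cycle_def) (metis comp_apply)
  show "(\<forall>x\<in>V. sat_s K' x \<phi> = sat_s K (g x) \<phi>)" and
         "(\<forall>\<pi>'. (\<forall>j. \<pi>' j \<in> V) \<longrightarrow> (\<forall>i. sat_p K' \<pi>' i \<psi> = sat_p K (g \<circ> \<pi>') i \<psi>))"
  proof (induct \<phi> and \<psi>)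
    case (Prop p) then show ?case using lab by simp
  next
    case (SNot \<phi>) then show ?case by simp
  next
    case (SAnd \<phi>1 \<phi>2) then show ?case by simp
  next
    case (SOr \<phi>1 \<phi>2) then show ?case by simp
  next
    case (Ex \<psi>)
    show ?case
    proof
      fix x assume x: "x \<in> V"
      show "sat_s K' x (Ex \<psi>) = sat_s K (g x) (Ex \<psi>)"
      proof
        assume "sat_s K' x (Ex \<psi>)"
        then obtain \<pi>' where p: "\<pi>' \<in> Pth K' x" "sat_p K' \<pi>' 0 \<psi>" by auto
        then show "sat_s K (g x) (Ex \<psi>)" using Ex inV[OF p(1) x] proj[OF p(1) x] by (fastforce simp: comp_def)
      next
        assume "sat_s K (g x) (Ex \<psi>)"
        then obtain \<pi> where p: "\<pi> \<in> Pth K (g x)" "sat_p K \<pi> 0 \<psi>" by auto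
        then obtain \<pi>' where "\<pi>'\<in>Pth K' x" "g \<circ> \<pi>' = \<pi>" using liftP x by blast
        then show "sat_s K' x (Ex \<psi>)" using Ex inV[OF _ x] p by (fastforce simp: comp_def)
      qed
    qed
  next
    case (All \<psi>)
    show ?case
    proof
      fix x assume x: "x \<in> V"
      show "sat_s K' x (All \<psi>) = sat_s K (g x) (All \<psi>)"
      proof
        assume a: "sat_s K' x (All \<psi>)"
        show "sat_s K (g x) (All \<psi>)"
        proof (simp, intro ballI)
          fix \<pi> assume p: "\<pi> \<in> Pth K (g x)"
          then obtain \<pi>' where "\<pi>'\<in>Pth K' x" "g \<circ> \<pi>' = \<pi>" using liftP x by blast
          then show "sat_p K \<pi> 0 \<psi>" using All inV[OF _ x] a by (fastforce simp: comp_def)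
        qed
      next
        assume a: "sat_s K (g x) (All \<psi>)"
        show "sat_s K' x (All \<psi>)"
        proof (simp, intro ballI)
          fix \<pi>' assume p: "\<pi>' \<in> Pth K' x"
          then show "sat_p K' \<pi>' 0 \<psi>" using All inV[OF p x] proj[OF p x] a by (fastforce simp: comp_def)
        qed
      qed
    qed
  next
    case (ExC \<psi>)
    show ?case
    proof
      fix x assume x: "x \<in> V"
      show "sat_s K' x (ExC \<psi>) = sat_s K (g x) (ExC \<psi>)"
      proof
        assume "sat_s K' x (ExC \<psi>)"
        then obtain \<pi>' where p: "\<pi>' \<in> Cyc K' x" "sat_p K' \<pi>' 0 \<psi>" by auto
        have "\<pi>' \<in> Pth K' x" using p by (simp add: Cyc_def)
        then show "sat_s K (g x) (ExC \<psi>)" using ExC inV[OF _ x] projC[OF p(1) x] p by (fastforce simp: comp_def)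
      next
        assume "sat_s K (g x) (ExC \<psi>)"
        then obtain \<pi> where p: "\<pi> \<in> Cyc K (g x)" "sat_p K \<pi> 0 \<psi>" by auto
        then obtain \<pi>' where c: "\<pi>'\<in>Cyc K' x" "g \<circ> \<pi>' = \<pi>" using liftC x by blast
        then have "\<pi>' \<in> Pth K' x" by (simp add: Cyc_def)
        then show "sat_s K' x (ExC \<psi>)" using ExC inV[OF _ x] p c by (fastforce simp: comp_def)
      qed
    qed
  next
    case (AllC \<psi>)
    show ?case
    proof
      fix x assume x: "x \<in> V"
      show "sat_s K' x (AllC \<psi>) = sat_s K (g x) (AllC \<psi>)"
      proof
        assume a: "sat_s K' x (AllC \<psi>)"
        show "sat_s K (g x) (AllC \<psi>)"
        proof (simp, intro ballI)
          fix \<pi> assume p: "\<pi> \<in> Cyc K (g x)"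
          then obtain \<pi>' where c: "\<pi>'\<in>Cyc K' x" "g \<circ> \<pi>' = \<pi>" using liftC x by blast
          then have "\<pi>' \<in> Pth K' x" by (simp add: Cyc_def)
          then show "sat_p K \<pi> 0 \<psi>" using AllC inV[OF _ x] a c by (fastforce simp: comp_def)
        qed
      next
        assume a: "sat_s K (g x) (AllC \<psi>)"
        show "sat_s K' x (AllC \<psi>)"
        proof (simp, intro ballI)
          fix \<pi>' assume p: "\<pi>' \<in> Cyc K' x"
          then have "\<pi>' \<in> Pth K' x" by (simp add: Cyc_def)
          then show "sat_p K' \<pi>' 0 \<psi>" using AllC inV[OF _ x] projC[OF p x] a by (fastforce simp: comp_def)
        qed
      qed
    qed
  next
    case (State \<phi>) then show ?case by simp
  next
    case (PNot \<psi>) then show ?case by simp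
  next
    case (PAnd \<psi>1 \<psi>2) then show ?case by simp
  next
    case (POr \<psi>1 \<psi>2) then show ?case by simp
  next
    case (Next \<psi>) then show ?case by simp
  next
    case (Until \<psi>1 \<psi>2) then show ?case by simp
  qed
qed


abbreviation hn :: "(nat \<times> nat) list \<Rightarrow> nat" where "hn \<equiv> to_nat"

definition dec :: "('a,'w) kripke \<Rightarrow> nat \<Rightarrow> 'w" where
  "dec K c = from_nat_into (W K) c"

fun gl :: "('a,'w) kripke \<Rightarrow> (nat \<times> nat) list \<Rightarrow> 'w" where
  "gl K [] = wI K"
| "gl K (e # xs) = dec K (fst e)"

fun vl :: "('a,'w) kripke \<Rightarrow> (nat \<times> nat) list \<Rightarrow> bool" where
  "vl K [] = True"
| "vl K (e # xs) = (vl K xs \<and> (gl K xs, dec K (fst e)) \<in> R K)"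

fun md :: "(nat \<times> nat) list \<Rightarrow> (nat \<times> nat) list option" where
  "md [] = None"
| "md (e # xs) = (if snd e = 1 then Some xs else if snd e = 2 then md xs else None)"

definition fb :: "('a,'w) kripke \<Rightarrow> (nat \<times> nat) list \<Rightarrow> (nat \<times> nat) list option" where
  "fb K xs = (if vl K xs then (case md xs of Some a \<Rightarrow> if (gl K xs, gl K a) \<in> R K then Some a else None
                                     | None \<Rightarrow> None) else None)"

definition VT :: "('a,'w) kripke \<Rightarrow> nat set" where
  "VT K = hn ` {xs. vl K xs}"

definition R0T :: "('a,'w) kripke \<Rightarrow> (nat \<times> nat) set" where
  "R0T K = {(hn xs, hn (e # xs)) | xs e. vl K (e # xs)}"

definition fT :: "('a,'w) kripke \<Rightarrow> nat \<Rightarrow> nat option" where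
  "fT K n = (if n \<in> VT K then map_option hn (fb K (from_nat n)) else None)"

definition KT :: "('a,'w) kripke \<Rightarrow> ('a, nat) kripke" where
  "KT K = \<lparr>AP = AP K, W = VT K,
           R = R0T K \<union> {(hn xs, hn a) | xs a. fb K xs = Some a},
           L = (\<lambda>n. L K (gl K (from_nat n))), wI = hn []\<rparr>"

lemma vl_append: "vl K (ys @ xs) \<Longrightarrow> vl K xs"
  by (induction ys) auto

lemma md_suffix: "md x = Some a \<Longrightarrow> \<exists>ys. ys \<noteq> [] \<and> x = ys @ a"
proof (induction x)
  case Nil then show ?case by simp
next
  case (Cons e x)
  show ?case
  proof (cases "snd e = 1")
    case True then show ?thesis using Cons by auto
  next
    case False
    then have "snd e = 2" "md x = Some a" using Cons.prems by (auto split: if_splits)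
    then obtain ys where "ys \<noteq> []" "x = ys @ a" using Cons.IH by blast
    then show ?thesis by (intro exI[of _ "e # ys"]) auto
  qed
qed

lemma md_mid: "md (ys2 @ x1) = Some a \<Longrightarrow> ys2 \<noteq> [] \<Longrightarrow> x1 = ys1 @ a \<Longrightarrow> ys1 \<noteq> [] \<Longrightarrow> md x1 = Some a"
proof (induction ys2)
  case Nil then show ?case by simp
next
  case (Cons e ys2)
  show ?case
  proof (cases "snd e = 1")
    case True
    then have "a = ys2 @ ys1 @ a" using Cons.prems by simp
    then have "length a = length ys2 + length ys1 + length a" by (metis length_append add.assoc)
    then show ?thesis using Cons.prems(4) by simp
  next
    case False
    then have m: "md (ys2 @ x1) = Some a" using Cons.prems by (auto split: if_splits)
    show ?thesis
    proof (cases "ys2 = []")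
      case True then show ?thesis using m by simp
    next
      case False then show ?thesis using Cons m by blast
    qed
  qed
qed

lemma R0T_trancl_iff:
  "(m, n) \<in> (R0T K)\<^sup>+ \<longleftrightarrow> (\<exists>xs ys. m = hn xs \<and> n = hn (ys @ xs) \<and> ys \<noteq> [] \<and> vl K (ys @ xs))"
proof
  assume "(m, n) \<in> (R0T K)\<^sup>+"
  then show "\<exists>xs ys. m = hn xs \<and> n = hn (ys @ xs) \<and> ys \<noteq> [] \<and> vl K (ys @ xs)"
  proof (induction rule: trancl_induct)
    case (base y)
    then obtain xs e where "m = hn xs" "y = hn (e # xs)" "vl K (e # xs)" by (auto simp: R0T_def)
    then show ?case by (intro exI[of _ xs] exI[of _ "[e]"]) auto
  next
    case (step y z)
    then obtain xs ys where a: "m = hn xs" "y = hn (ys @ xs)" "ys \<noteq> []" by blast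
    from step obtain xs2 e where b: "y = hn xs2" "z = hn (e # xs2)" "vl K (e # xs2)" by (auto simp: R0T_def)
    then have "xs2 = ys @ xs" using a by simp
    then show ?case using a b by (intro exI[of _ xs] exI[of _ "e # ys"]) auto
  qed
next
  assume "\<exists>xs ys. m = hn xs \<and> n = hn (ys @ xs) \<and> ys \<noteq> [] \<and> vl K (ys @ xs)"
  then obtain xs ys where a: "m = hn xs" "n = hn (ys @ xs)" "ys \<noteq> []" "vl K (ys @ xs)" by blast
  have "ys \<noteq> [] \<Longrightarrow> vl K (ys @ xs) \<Longrightarrow> (hn xs, hn (ys @ xs)) \<in> (R0T K)\<^sup>+"
  proof (induction ys)
    case Nil then show ?case by simp
  next
    case (Cons e ys)
    have v: "vl K (e # (ys @ xs))" using Cons.prems by simp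
    have st: "(hn (ys @ xs), hn (e # ys @ xs)) \<in> R0T K" using v unfolding R0T_def by blast
    show ?case
    proof (cases "ys = []")
      case True then show ?thesis using st by auto
    next
      case False
      then have "(hn xs, hn (ys @ xs)) \<in> (R0T K)\<^sup>+" using Cons by simp
      then show ?thesis using st by simp
    qed
  qed
  then show "(m, n) \<in> (R0T K)\<^sup>+" using a by simp
qed

lemma fb_Some: "fb K xs = Some a \<Longrightarrow> vl K xs \<and> md xs = Some a \<and> (gl K xs, gl K a) \<in> R K"
  by (auto simp: fb_def split: if_splits option.splits)

lemma fT_Some: "fT K n = Some m \<longleftrightarrow> (\<exists>xs a. n = hn xs \<and> m = hn a \<and> fb K xs = Some a)"
proof
  assume a: "fT K n = Some m"
  then have "n \<in> VT K" by (simp add: fT_def split: if_splits)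
  then obtain xs where xs: "n = hn xs" unfolding VT_def by blast
  then obtain b where "fb K xs = Some b" "m = hn b" using a by (auto simp add: fT_def split: if_splits)
  then show "\<exists>xs a. n = hn xs \<and> m = hn a \<and> fb K xs = Some a" using xs by blast
next
  assume "\<exists>xs a. n = hn xs \<and> m = hn a \<and> fb K xs = Some a"
  then obtain xs a where a: "n = hn xs" "m = hn a" "fb K xs = Some a" by blast
  then have "n \<in> VT K" using fb_Some unfolding VT_def by blast
  then show "fT K n = Some m" using a by (simp add: fT_def)
qed

lemma dom_fT: "w \<in> dom (fT K) \<longleftrightarrow> (\<exists>xs a. w = hn xs \<and> fb K xs = Some a)"
  using fT_Some[of K w] by blast

lemma tree_KT: "tree_with_back_edges (KT K)"
  unfolding tree_with_back_edges_def
proof (intro exI[of _ "R0T K"] exI[of _ "fT K"] conjI)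
  show "is_tree (W (KT K)) (R0T K) (wI (KT K))"
    unfolding is_tree_def KT_def
  proof (simp, intro conjI)
    show "hn [] \<in> VT K" by (auto simp: VT_def)
    show "R0T K \<subseteq> VT K \<times> VT K" by (auto simp: R0T_def VT_def)
    show "\<forall>u. (u, hn []) \<notin> R0T K" by (auto simp: R0T_def)
    show "\<forall>w\<in>VT K. w \<noteq> hn [] \<longrightarrow> (\<exists>!u. (u, w) \<in> R0T K)"
    proof (intro ballI impI)
      fix w assume w: "w \<in> VT K" "w \<noteq> hn []"
      then obtain x where x0: "w = hn x" "vl K x" by (auto simp: VT_def)
      then have "x \<noteq> []" using w by auto
      then obtain e xs where "x = e # xs" by (cases x) auto
      then have x: "w = hn (e # xs)" "vl K (e # xs)" using x0 by auto
      have "(hn xs, w) \<in> R0T K" using x unfolding R0T_def by blast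
      moreover have "u = hn xs" if uw: "(u, w) \<in> R0T K" for u
      proof -
        obtain xs' e' where "u = hn xs'" "w = hn (e' # xs')" using uw unfolding R0T_def by blast
        then show ?thesis using x by simp
      qed
      ultimately show "\<exists>!u. (u, w) \<in> R0T K" by blast
    qed
    show "\<forall>w\<in>VT K. (hn [], w) \<in> (R0T K)\<^sup>*"
    proof
      fix w assume "w \<in> VT K"
      then obtain x where x: "w = hn x" "vl K x" by (auto simp: VT_def)
      show "(hn [], w) \<in> (R0T K)\<^sup>*"
      proof (cases "x = []")
        case True then show ?thesis using x by simp
      next
        case False
        then have "(hn [], w) \<in> (R0T K)\<^sup>+"
          unfolding R0T_trancl_iff using x by (intro exI[of _ "[]"] exI[of _ x]) auto
        then show ?thesis by simp
      qed
    qed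
  qed
  show "R (KT K) = R0T K \<union> {(w, the (fT K w)) | w. w \<in> dom (fT K)}"
  proof -
    have "{(hn xs, hn a) | xs a. fb K xs = Some a} = {(w, the (fT K w)) | w. w \<in> dom (fT K)}"
    proof (intro set_eqI iffI)
      fix p assume "p \<in> {(hn xs, hn a) | xs a. fb K xs = Some a}"
      then obtain xs a where p: "p = (hn xs, hn a)" "fb K xs = Some a" by blast
      then have "fT K (hn xs) = Some (hn a)" using fT_Some by blast
      then show "p \<in> {(w, the (fT K w)) | w. w \<in> dom (fT K)}" using p by force
    next
      fix p assume "p \<in> {(w, the (fT K w)) | w. w \<in> dom (fT K)}"
      then obtain w b where p: "p = (w, the (fT K w))" "fT K w = Some b" by blast
      then obtain xs a where "w = hn xs" "b = hn a" "fb K xs = Some a" using fT_Some by blast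
      then show "p \<in> {(hn xs, hn a) | xs a. fb K xs = Some a}" using p by auto
    qed
    then show ?thesis by (simp add: KT_def)
  qed
  show "\<forall>w\<in>dom (fT K). (the (fT K w), w) \<in> (R0T K)\<^sup>+"
  proof
    fix w assume "w \<in> dom (fT K)"
    then obtain xs a where x: "w = hn xs" "fb K xs = Some a" using dom_fT by blast
    then have fw: "fT K w = Some (hn a)" using fT_Some by blast
    have f: "vl K xs" "md xs = Some a" using fb_Some[OF x(2)] by auto
    then obtain ys where ys: "ys \<noteq> []" "xs = ys @ a" using md_suffix by blast
    have "(hn a, hn xs) \<in> (R0T K)\<^sup>+"
      unfolding R0T_trancl_iff using ys f by blast
    then show "(the (fT K w), w) \<in> (R0T K)\<^sup>+" using fw x by simp
  qed
  show "\<forall>w1 w2. w1 \<in> dom (fT K) \<longrightarrow> w2 \<in> dom (fT K) \<longrightarrow>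
          (the (fT K w2), w1) \<in> (R0T K)\<^sup>+ \<longrightarrow> (w1, w2) \<in> (R0T K)\<^sup>+ \<longrightarrow> fT K w1 = fT K w2"
  proof (intro allI impI)
    fix w1 w2 assume d1: "w1 \<in> dom (fT K)" and d2: "w2 \<in> dom (fT K)"
      and t1: "(the (fT K w2), w1) \<in> (R0T K)\<^sup>+" and t2: "(w1, w2) \<in> (R0T K)\<^sup>+"
    obtain x1 b where x1: "w1 = hn x1" "fb K x1 = Some b"
      using d1 dom_fT by blast
    then have f1: "fT K w1 = Some (hn b)" using fT_Some by blast
    obtain x2 a where x2: "w2 = hn x2" "fb K x2 = Some a"
      using d2 dom_fT by blast
    then have f2: "fT K w2 = Some (hn a)" using fT_Some by blast
    obtain xa ys1 where "hn a = hn xa" "w1 = hn (ys1 @ xa)" "ys1 \<noteq> []"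
      using t1 f2 unfolding R0T_trancl_iff by auto
    then have y1: "x1 = ys1 @ a" "ys1 \<noteq> []" using x1 by auto
    obtain xb ys2 where "w1 = hn xb" "w2 = hn (ys2 @ xb)" "ys2 \<noteq> []"
      using t2 unfolding R0T_trancl_iff by auto
    then have y2: "x2 = ys2 @ x1" "ys2 \<noteq> []" using x1 x2 by auto
    have "md x2 = Some a" using fb_Some[OF x2(2)] by simp
    then have "md x1 = Some a" using md_mid[of ys2 x1 a ys1] y1 y2 by simp
    then have "b = a" using fb_Some[OF x1(2)] by simp
    then show "fT K w1 = fT K w2" using f1 f2 by simp
  qed
qed


lemma dec_in: assumes "is_kripke K" shows "dec K c \<in> W K"
proof -
  have "W K \<noteq> {}" using assms by (simp add: is_kripke_def)
  then show ?thesis unfolding dec_def by (rule from_nat_into)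
qed

lemma dec_code: "is_kripke K \<Longrightarrow> v \<in> W K \<Longrightarrow> dec K (to_nat_on (W K) v) = v"
  unfolding dec_def is_kripke_def by simp

lemma gl_in: assumes "is_kripke K" shows "gl K xs \<in> W K"
proof (cases xs)
  case Nil then show ?thesis using assms by (simp add: is_kripke_def)
next
  case (Cons e ys) then show ?thesis using dec_in[OF assms] by simp
qed

lemma R_in: "is_kripke K \<Longrightarrow> (v, u) \<in> R K \<Longrightarrow> u \<in> W K"
  unfolding is_kripke_def by blast

lemma fb_valid: "fb K xs = Some a \<Longrightarrow> vl K a"
proof -
  assume a: "fb K xs = Some a"
  then have "vl K xs" "md xs = Some a" using fb_Some by auto
  then obtain ys where "xs = ys @ a" using md_suffix by blast
  then show "vl K a" using \<open>vl K xs\<close> vl_append by blast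
qed

lemma RKT_cases:
  assumes "(m, n) \<in> R (KT K)"
  obtains xs e where "m = hn xs" "n = hn (e # xs)" "vl K (e # xs)"
    | xs a where "m = hn xs" "n = hn a" "fb K xs = Some a"
proof -
  have "(m, n) \<in> R0T K \<or> (m, n) \<in> {(hn xs, hn a) | xs a. fb K xs = Some a}"
    using assms by (simp add: KT_def)
  then show ?thesis using that unfolding R0T_def by blast
qed

lemma RKT_sub: "(m, n) \<in> R (KT K) \<Longrightarrow> m \<in> VT K \<and> n \<in> VT K"
proof (erule RKT_cases)
  fix xs e assume "m = hn xs" "n = hn (e # xs)" "vl K (e # xs)"
  then show ?thesis by (auto simp: VT_def)
next
  fix xs a assume "m = hn xs" "n = hn a" "fb K xs = Some a"
  then have "vl K xs" "vl K a" using fb_Some fb_valid by auto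
  then show ?thesis using \<open>m = hn xs\<close> \<open>n = hn a\<close> unfolding VT_def by blast
qed

lemma RKT_edge: "(m, n) \<in> R (KT K) \<Longrightarrow> (gl K (from_nat m), gl K (from_nat n)) \<in> R K"
proof (erule RKT_cases)
  fix xs e assume "m = hn xs" "n = hn (e # xs)" "vl K (e # xs)"
  then show ?thesis by simp
next
  fix xs a assume "m = hn xs" "n = hn a" "fb K xs = Some a"
  then show ?thesis using fb_Some[of K xs a] by simp
qed

lemma tree_edge: "vl K (e # xs) \<Longrightarrow> (hn xs, hn (e # xs)) \<in> R (KT K)"
proof -
  assume "vl K (e # xs)"
  then have "(hn xs, hn (e # xs)) \<in> R0T K" unfolding R0T_def by blast
  then show ?thesis by (simp add: KT_def)
qed

lemma back_edge: "fb K xs = Some a \<Longrightarrow> (hn xs, hn a) \<in> R (KT K)"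
  unfolding KT_def by simp

lemma kripke_KT:
  assumes k: "is_kripke K"
  shows "is_kripke (KT K)"
  unfolding is_kripke_def
proof (intro conjI ballI)
  show "finite (AP (KT K))" using k by (simp add: KT_def is_kripke_def)
  show "countable (W (KT K))" by simp
  have "hn [] \<in> VT K" unfolding VT_def by (rule imageI) simp
  then show "W (KT K) \<noteq> {}" "wI (KT K) \<in> W (KT K)" by (auto simp: KT_def)
  have "W (KT K) = VT K" by (simp add: KT_def)
  then show "R (KT K) \<subseteq> W (KT K) \<times> W (KT K)" using RKT_sub by auto
next
  fix w assume "w \<in> W (KT K)"
  then obtain xs where xs: "w = hn xs" "vl K xs" by (auto simp: KT_def VT_def)
  obtain v where v: "(gl K xs, v) \<in> R K" using k gl_in unfolding is_kripke_def by blast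
  have "v \<in> W K" using R_in[OF k v] .
  then have "vl K ((to_nat_on (W K) v, 0) # xs)" using xs v dec_code[OF k] by simp
  then show "\<exists>v. (w, v) \<in> R (KT K)" using tree_edge xs by blast
next
  fix w assume "w \<in> W (KT K)"
  have "gl K (from_nat w) \<in> W K" using gl_in[OF k] .
  then show "L (KT K) w \<subseteq> AP (KT K)" using k unfolding KT_def is_kripke_def by auto
qed

fun flift :: "('a,'w) kripke \<Rightarrow> (nat \<times> nat) list \<Rightarrow> (nat \<Rightarrow> 'w) \<Rightarrow> nat \<Rightarrow> (nat \<times> nat) list" where
  "flift K xs \<pi> 0 = xs"
| "flift K xs \<pi> (Suc t) = (to_nat_on (W K) (\<pi> (Suc t)), 0) # flift K xs \<pi> t"

fun clift :: "('a,'w) kripke \<Rightarrow> (nat \<times> nat) list \<Rightarrow> (nat \<Rightarrow> 'w) \<Rightarrow> nat \<Rightarrow> (nat \<times> nat) list" where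
  "clift K xs \<pi> 0 = xs"
| "clift K xs \<pi> (Suc t) = (if clift K xs \<pi> t \<noteq> xs \<and> \<pi> (Suc t) = gl K xs then xs
     else (to_nat_on (W K) (\<pi> (Suc t)), if clift K xs \<pi> t = xs then 1 else 2) # clift K xs \<pi> t)"

lemma flift_inv:
  assumes k: "is_kripke K" and xs: "vl K xs" and p: "\<pi> \<in> Pth K (gl K xs)"
  shows "vl K (flift K xs \<pi> t) \<and> gl K (flift K xs \<pi> t) = \<pi> t"
proof (induction t)
  case 0 then show ?case using xs p by (simp add: Pth_def)
next
  case (Suc t)
  have e: "(\<pi> t, \<pi> (Suc t)) \<in> R K" using p by (simp add: Pth_def)
  then have "\<pi> (Suc t) \<in> W K" using R_in[OF k] by blast
  then show ?case using Suc e dec_code[OF k] by simp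
qed

lemma liftP_KT:
  assumes k: "is_kripke K" and x: "x \<in> VT K" and p: "\<pi> \<in> Pth K (gl K (from_nat x))"
  shows "\<exists>\<pi>'\<in>Pth (KT K) x. (\<lambda>n. gl K (from_nat n)) \<circ> \<pi>' = \<pi>"
proof -
  obtain xs where xs: "x = hn xs" "vl K xs" using x by (auto simp: VT_def)
  have p': "\<pi> \<in> Pth K (gl K xs)" using p xs by simp
  note inv = flift_inv[OF k xs(2) p']
  have "(\<lambda>t. hn (flift K xs \<pi> t)) \<in> Pth (KT K) x"
    unfolding Pth_def
  proof (intro CollectI conjI allI)
    show "hn (flift K xs \<pi> 0) = x" using xs by simp
    fix t
    have "vl K (flift K xs \<pi> (Suc t))" using inv by blast
    then have "vl K ((to_nat_on (W K) (\<pi> (Suc t)), 0) # flift K xs \<pi> t)" by simp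
    from tree_edge[OF this] show "(hn (flift K xs \<pi> t), hn (flift K xs \<pi> (Suc t))) \<in> R (KT K)" by simp
  qed
  moreover have "(\<lambda>n. gl K (from_nat n)) \<circ> (\<lambda>t. hn (flift K xs \<pi> t)) = \<pi>"
    using inv by (auto simp: fun_eq_iff)
  ultimately show ?thesis by blast
qed

lemma md_len: "md y = Some a \<Longrightarrow> length a < length y"
  using md_suffix by fastforce

lemma clift_inv:
  assumes k: "is_kripke K" and xs: "vl K xs" and p: "\<pi> \<in> Pth K (gl K xs)"
  shows "vl K (clift K xs \<pi> t) \<and> gl K (clift K xs \<pi> t) = \<pi> t \<and>
         (clift K xs \<pi> t = xs \<or> md (clift K xs \<pi> t) = Some xs)"
proof (induction t)
  case 0 then show ?case using xs p by (simp add: Pth_def)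
next
  case (Suc t)
  define r where "r = clift K xs \<pi> t"
  have IH: "vl K r" "gl K r = \<pi> t" "r = xs \<or> md r = Some xs" using Suc r_def by auto
  have e: "(\<pi> t, \<pi> (Suc t)) \<in> R K" using p by (simp add: Pth_def)
  then have w: "\<pi> (Suc t) \<in> W K" using R_in[OF k] by blast
  show ?case
  proof (cases "r \<noteq> xs \<and> \<pi> (Suc t) = gl K xs")
    case True
    then have c: "clift K xs \<pi> (Suc t) = xs" by (simp add: r_def)
    show ?thesis unfolding c using xs True by simp
  next
    case False
    then have c: "clift K xs \<pi> (Suc t) = (to_nat_on (W K) (\<pi> (Suc t)), if r = xs then 1 else 2) # r"
      unfolding r_def clift.simps(2) by (rule if_not_P)
    show ?thesis unfolding c using IH e w dec_code[OF k] by auto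
  qed
qed

lemma liftC_KT:
  assumes k: "is_kripke K" and x: "x \<in> VT K" and p: "\<pi> \<in> Cyc K (gl K (from_nat x))"
  shows "\<exists>\<pi>'\<in>Cyc (KT K) x. (\<lambda>n. gl K (from_nat n)) \<circ> \<pi>' = \<pi>"
proof -
  obtain xs where xs: "x = hn xs" "vl K xs" using x by (auto simp: VT_def)
  have p': "\<pi> \<in> Pth K (gl K xs)" and cyc: "is_cycle \<pi>" using p xs by (auto simp: Cyc_def)
  note inv = clift_inv[OF k xs(2) p']
  define \<rho> where "\<rho> = clift K xs \<pi>"
  have step: "(hn (\<rho> t), hn (\<rho> (Suc t))) \<in> R (KT K)" for t
  proof (cases "\<rho> t \<noteq> xs \<and> \<pi> (Suc t) = gl K xs")
    case True
    then have r: "\<rho> (Suc t) = xs" by (simp add: \<rho>_def)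
    have m: "md (\<rho> t) = Some xs" using inv True \<rho>_def by blast
    have "(\<pi> t, \<pi> (Suc t)) \<in> R K" using p' by (simp add: Pth_def)
    moreover have "gl K (\<rho> t) = \<pi> t" using inv \<rho>_def by blast
    ultimately have "(gl K (\<rho> t), gl K xs) \<in> R K" using True by simp
    then have "fb K (\<rho> t) = Some xs" using m inv unfolding fb_def \<rho>_def by auto
    then show ?thesis using r back_edge by simp
  next
    case False
    then have r: "\<rho> (Suc t) = (to_nat_on (W K) (\<pi> (Suc t)), if \<rho> t = xs then 1 else 2) # \<rho> t"
      unfolding \<rho>_def clift.simps(2) by (rule if_not_P)
    have "vl K (\<rho> (Suc t))" using inv \<rho>_def by blast
    then show ?thesis using r tree_edge by metis
  qed
  have path: "(\<lambda>t. hn (\<rho> t)) \<in> Pth (KT K) x"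
    unfolding Pth_def using xs step by (simp add: \<rho>_def)
  have "is_cycle (\<lambda>t. hn (\<rho> t))"
    unfolding is_cycle_def
  proof
    fix i
    have "\<pi> 0 = gl K xs" using p' by (simp add: Pth_def)
    obtain j where j: "j > Suc i" "\<pi> j = \<pi> 0" using cyc unfolding is_cycle_def by blast
    then obtain j' where j': "j = Suc j'" "j' > i" by (cases j) auto
    show "\<exists>j>i. hn (\<rho> j) = hn (\<rho> 0)"
    proof (cases "\<rho> j' = xs")
      case True then show ?thesis using j' by (intro exI[of _ j']) (simp add: \<rho>_def)
    next
      case False
      then have "\<rho> j = xs" using j j' \<open>\<pi> 0 = gl K xs\<close> by (simp add: \<rho>_def)
      then show ?thesis using j j' by (intro exI[of _ j]) (simp add: \<rho>_def)
    qed
  qed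
  moreover have "(\<lambda>n. gl K (from_nat n)) \<circ> (\<lambda>t. hn (\<rho> t)) = \<pi>"
    using inv by (auto simp: fun_eq_iff \<rho>_def)
  ultimately show ?thesis using path by (auto simp: Cyc_def)
qed

theorem mainTheorem4:
  fixes \<phi> :: "'a sform" and K :: "('a, 'w) kripke"
  assumes "is_kripke K" and "models K \<phi>"
  shows "\<exists>K' :: ('a, nat) kripke. is_kripke K' \<and> tree_with_back_edges K' \<and> models K' \<phi>"
proof (intro exI conjI)
  let ?g = "\<lambda>n. gl K (from_nat n)"
  have H: "\<forall>x\<in>VT K. sat_s (KT K) x \<phi> = sat_s K (?g x) \<phi>"
  proof (rule hom(1)[where V = "VT K" and K' = "KT K" and g = ?g and K = K])
    show "\<And>x y. x \<in> VT K \<Longrightarrow> (x, y) \<in> R (KT K) \<Longrightarrow> y \<in> VT K" using RKT_sub by blast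
    show "\<And>x y. x \<in> VT K \<Longrightarrow> (x, y) \<in> R (KT K) \<Longrightarrow> (?g x, ?g y) \<in> R K" using RKT_edge by blast
    show "\<And>x. x \<in> VT K \<Longrightarrow> L (KT K) x = L K (?g x)" by (simp add: KT_def)
    show "\<And>x \<pi>. x \<in> VT K \<Longrightarrow> \<pi> \<in> Pth K (?g x) \<Longrightarrow> \<exists>\<pi>'\<in>Pth (KT K) x. ?g \<circ> \<pi>' = \<pi>"
      using liftP_KT[OF assms(1)] by blast
    show "\<And>x \<pi>. x \<in> VT K \<Longrightarrow> \<pi> \<in> Cyc K (?g x) \<Longrightarrow> \<exists>\<pi>'\<in>Cyc (KT K) x. ?g \<circ> \<pi>' = \<pi>"
      using liftC_KT[OF assms(1)] by blast
  qed
  have "hn [] \<in> VT K" by (simp add: VT_def)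
  then show "models (KT K) \<phi>" using H assms(2) by (simp add: models_def KT_def)
  show "is_kripke (KT K)" using kripke_KT[OF assms(1)] .
  show "tree_with_back_edges (KT K)" by (rule tree_KT)
qed

end
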